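(* Let $\mathcal{P}$ be the regular octahedron, centered at the origin and scaled so that its midsphere (the sphere touching the midpoint of every edge) is the unit sphere $\mathbb{S}^2\subset\mathbb{R}^3$. For $\delta\in[0,\pi/2]$ let $L(\delta)$ be the configuration of the twelve lines obtained from the lines containing the twelve edges of $\mathcal{P}$ by rotating each line, inside the plane tangent to $\mathbb{S}^2$ at the midpoint $m$ of that edge, about the axis through the origin and $m$ by the angle $\delta$, all lines being rotated in the same sense (counterclockwise as viewed from the tip of the axis, i.e. from outside the sphere). Let $d(\delta)$ denote the minimal distance between two distinct lines of $L(\delta)$. Then the maximum of $d(\delta)$ over $\delta\in[0,\pi/2]$ is attained at the angle $\delta_{\mathcal{O}}$ with $$\tan(\delta_{\mathcal{O}})=\frac{3^{1/4}}{\sqrt{2}}$$ (approximately $\delta_{\mathcal{O}}\simeq 0.74946$), and the square of this maximal distance is the value at $\delta=\delta_{\mathcal{O}}$ of the function $$-\,\frac{4\sin^2(2\delta)}{\bigl(\cos(2\delta)-3\bigr)\bigl(\cos(2\delta)+5\bigr)},$$ namely $$d(\delta_{\mathcal{O}})^2=2-\sqrt{3}=\frac{(\sqrt{3}-1)^2}{2}\simeq 0.26795 .$$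
   Context: Each line of $L(\delta)$ is tangent to the unit sphere (at the corresponding edge midpoint). At $\delta=0$ the lines contain the edges of the octahedron; at $\delta=\pi/2$ they contain the edges of the dual cube (with the same midsphere). The rotation is carried out so that the configuration $L(\delta)$ is invariant under the group of proper (orientation-preserving) symmetries of the octahedron. *)

theory Defs
  imports "HOL-Analysis.Analysis" "HOL-Analysis.Cross3"
begin

unbundle no cross3_syntax

text \<open>Regular octahedron with midsphere the unit sphere: vertices are plus/minus sqrt 2 times
the standard basis vectors (edge midpoints then have norm 1).\<close>
definition oct_vertices :: "(real^3) set" where
  "oct_vertices = {x. \<exists>i. x = sqrt 2 *\<^sub>R axis i 1 \<or> x = - (sqrt 2 *\<^sub>R axis i 1)}"

definition oct_edges :: "((real^3) * (real^3)) set" where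
  "oct_edges = {(v, w). v \<in> oct_vertices \<and> w \<in> oct_vertices \<and> v \<noteq> w \<and> v \<noteq> - w}"

text \<open>The line through the edge midpoint m, obtained from the edge line by rotating it by the
angle delta about the axis through the origin and m (counterclockwise viewed from outside,
i.e. right-hand rule about m). Since the unit edge direction u is orthogonal to m, the rotated
direction is cos delta u + sin delta (m cross u).\<close>
definition rotated_edge_line :: "real \<Rightarrow> real^3 \<Rightarrow> real^3 \<Rightarrow> (real^3) set" where
  "rotated_edge_line \<delta> v w =
     (let m = (1/2) *\<^sub>R (v + w); u = (1 / norm (w - v)) *\<^sub>R (w - v)
      in {m + t *\<^sub>R (cos \<delta> *\<^sub>R u + sin \<delta> *\<^sub>R cross3 m u) | t. True})"

definition line_config :: "real \<Rightarrow> (real^3) set set" where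
  "line_config \<delta> = (\<lambda>(v, w). rotated_edge_line \<delta> v w) ` oct_edges"

definition min_line_dist :: "real \<Rightarrow> real" where
  "min_line_dist \<delta> =
     Inf {setdist l1 l2 | l1 l2. l1 \<in> line_config \<delta> \<and> l2 \<in> line_config \<delta> \<and> l1 \<noteq> l2}"

end

theory Submission
  imports Defs
begin

type_synonym iv = "int \<times> int \<times> int"

fun icr :: "iv \<Rightarrow> iv \<Rightarrow> iv" where
  "icr (a1,a2,a3) (b1,b2,b3) = (a2*b3-a3*b2, a3*b1-a1*b3, a1*b2-a2*b1)"
fun idt :: "iv \<Rightarrow> iv \<Rightarrow> int" where
  "idt (a1,a2,a3) (b1,b2,b3) = a1*b1+a2*b2+a3*b3"
fun iad :: "iv \<Rightarrow> iv \<Rightarrow> iv" where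
  "iad (a1,a2,a3) (b1,b2,b3) = (a1+b1,a2+b2,a3+b3)"
fun isb :: "iv \<Rightarrow> iv \<Rightarrow> iv" where
  "isb (a1,a2,a3) (b1,b2,b3) = (a1-b1,a2-b2,a3-b3)"
fun ing :: "iv \<Rightarrow> iv" where
  "ing (a1,a2,a3) = (-a1,-a2,-a3)"
fun ism :: "int \<Rightarrow> iv \<Rightarrow> iv" where
  "ism k (a1,a2,a3) = (k*a1,k*a2,k*a3)"

definition vec3 :: "iv \<Rightarrow> real^3" where
  "vec3 x = (case x of (a,b,c) \<Rightarrow> vector [of_int a, of_int b, of_int c])"

lemma vec3_comp: "vec3 (a,b,c) $ 1 = of_int a" "vec3 (a,b,c) $ 2 = of_int b" "vec3 (a,b,c) $ 3 = of_int c"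
  by (simp_all add: vec3_def)

lemma vec3_cross: "cross3 (vec3 x) (vec3 y) = vec3 (icr x y)"
  by (cases x; cases y) (simp add: cross3_def vec_eq_iff forall_3 vec3_comp vector_def)

lemma vec3_inner: "vec3 x \<bullet> vec3 y = of_int (idt x y)"
  by (cases x; cases y) (simp add: inner_vec_def sum_3 vec3_comp)

lemma vec3_add: "vec3 (iad x y) = vec3 x + vec3 y"
  by (cases x; cases y) (simp add: vec_eq_iff forall_3 vec3_comp)

lemma vec3_sub: "vec3 (isb x y) = vec3 x - vec3 y"
  by (cases x; cases y) (simp add: vec_eq_iff forall_3 vec3_comp)

lemma vec3_ism: "vec3 (ism k x) = of_int k *\<^sub>R vec3 x"
  by (cases x) (simp add: vec_eq_iff forall_3 vec3_comp)

lemma icr_MA: "icr (iad a b) (isb b a) = ism 2 (icr a b)"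
  by (cases a; cases b) (simp add: algebra_simps)

lemma norm_vec3: "norm (vec3 x) = sqrt (of_int (idt x x))"
  by (simp add: norm_eq_sqrt_inner vec3_inner)

lemma gibbs:
  fixes r u v :: "real^3"
  defines "n \<equiv> cross3 u v"
  shows "(n \<bullet> n) *\<^sub>R r = (r \<bullet> cross3 v n) *\<^sub>R u + (r \<bullet> cross3 n u) *\<^sub>R v + (r \<bullet> n) *\<^sub>R n"
  unfolding n_def
  by (simp add: cross3_def vec_eq_iff forall_3 inner_vec_def sum_3 vector_def) algebra

lemma line_lower:
  fixes p q u v :: "real^3"
  defines "n \<equiv> cross3 u v"
  assumes "n \<noteq> 0" "K \<ge> 0" "((p - q) \<bullet> n)\<^sup>2 \<ge> K * (n \<bullet> n)"
  shows "sqrt K \<le> setdist {p + t *\<^sub>R u | t. True} {q + t *\<^sub>R v | t. True}"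
proof (rule le_setdistI)
  fix x y assume "x \<in> {p + t *\<^sub>R u | t. True}" "y \<in> {q + t *\<^sub>R v | t. True}"
  then obtain t1 t2 where x: "x = p + t1 *\<^sub>R u" and y: "y = q + t2 *\<^sub>R v" by auto
  have un: "u \<bullet> n = 0" "v \<bullet> n = 0" unfolding n_def using dot_cross_self by auto
  have e: "(x - y) \<bullet> n = (p - q) \<bullet> n"
    using un by (simp add: x y inner_diff_left inner_add_left)
  have cs: "\<bar>(x - y) \<bullet> n\<bar> \<le> norm (x - y) * norm n" by (rule Cauchy_Schwarz_ineq2)
  have nn: "norm n > 0" using assms(2) by simp
  have "sqrt K * norm n = sqrt (K * (n \<bullet> n))"
    by (simp add: real_sqrt_mult norm_eq_sqrt_inner)
  also have "\<dots> \<le> sqrt (((p - q) \<bullet> n)\<^sup>2)" using assms(4) by (simp add: real_sqrt_le_iff del: real_sqrt_abs)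
  also have "\<dots> = \<bar>(x - y) \<bullet> n\<bar>" using e by simp
  also have "\<dots> \<le> dist x y * norm n" using cs by (simp add: dist_norm)
  finally show "sqrt K \<le> dist x y" using nn by simp
qed auto

lemma dist_scaled: fixes x y n :: "real^3" assumes N: "N > 0" and e: "x - y = (c / N) *\<^sub>R n" shows "dist x y = \<bar>c\<bar> / N * norm n"
proof -
  have "dist x y = norm ((c / N) *\<^sub>R n)" by (simp only: dist_norm e)
  also have "\<dots> = \<bar>c / N\<bar> * norm n" by (rule norm_scaleR)
  also have "\<bar>c / N\<bar> = \<bar>c\<bar> / N" using N by simp
  finally show ?thesis .
qed

lemma div_inner_norm: fixes n :: "real^3" assumes N: "n \<bullet> n > 0" shows "\<bar>c\<bar> / (n \<bullet> n) * norm n = \<bar>c\<bar> / norm n"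
proof -
  have "n \<bullet> n = norm n * norm n" by (simp add: power2_norm_eq_inner[symmetric] power2_eq_square)
  moreover have "norm n > 0" using N by auto
  ultimately show ?thesis by simp
qed

lemma line_upper:
  fixes p q u v :: "real^3"
  defines "n \<equiv> cross3 u v"
  assumes "n \<noteq> 0"
  shows "setdist {p + t *\<^sub>R u | t. True} {q + t *\<^sub>R v | t. True} \<le> \<bar>(p - q) \<bullet> n\<bar> / norm n"
proof -
  define r where "r = p - q"
  define N where "N = n \<bullet> n"
  have N: "N > 0" using assms(2) unfolding N_def by simp
  define a where "a = (r \<bullet> cross3 v n)"
  define b where "b = (r \<bullet> cross3 n u)"
  define x where "x = p + (- (a / N)) *\<^sub>R u"
  define y where "y = q + (b / N) *\<^sub>R v"
  have g: "N *\<^sub>R r = a *\<^sub>R u + b *\<^sub>R v + (r \<bullet> n) *\<^sub>R n"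
    unfolding N_def n_def a_def b_def by (rule gibbs)
  have xy: "x - y = r - (a / N) *\<^sub>R u - (b / N) *\<^sub>R v"
    using x_def y_def r_def by (simp add: algebra_simps)
  have "N *\<^sub>R (x - y) = N *\<^sub>R r - a *\<^sub>R u - b *\<^sub>R v"
    using N unfolding xy by (simp add: scaleR_diff_right)
  also have "\<dots> = (r \<bullet> n) *\<^sub>R n" unfolding g by simp
  finally have e2: "N *\<^sub>R (x - y) = (r \<bullet> n) *\<^sub>R n" .
  have "x - y = (1 / N) *\<^sub>R (N *\<^sub>R (x - y))" using N by simp
  also have "\<dots> = ((r \<bullet> n) / N) *\<^sub>R n" unfolding e2 by simp
  finally have "x - y = ((r \<bullet> n) / N) *\<^sub>R n" .
  hence "dist x y = \<bar>r \<bullet> n\<bar> / N * norm n" by (rule dist_scaled[OF N])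
  also have "\<dots> = \<bar>r \<bullet> n\<bar> / norm n" using N unfolding N_def by (rule div_inner_norm)
  finally have d: "dist x y = \<bar>(p - q) \<bullet> n\<bar> / norm n" by (simp only: r_def)
  have xin: "x \<in> {p + t *\<^sub>R u | t. True}" unfolding x_def by (intro CollectI exI[of _ "-(a/N)"]) simp
  have yin: "y \<in> {q + t *\<^sub>R v | t. True}" unfolding y_def by (intro CollectI exI[of _ "b/N"]) simp
  have "setdist {p + t *\<^sub>R u | t. True} {q + t *\<^sub>R v | t. True} \<le> dist x y" by (rule setdist_le_dist[OF xin yin])
  then show ?thesis by (simp only: d)
qed

definition U6 :: "iv list" where
  "U6 = [(1,0,0),(-1,0,0),(0,1,0),(0,-1,0),(0,0,1),(0,0,-1)]"

lemma U6_norm: "\<forall>a\<in>set U6. \<forall>b\<in>set U6. a \<noteq> b \<and> a \<noteq> ing b \<longrightarrow> idt (isb b a) (isb b a) = 2"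
  by (simp add: U6_def)

lemma axis_vec3:
  fixes i :: 3
  shows "\<exists>a\<in>set U6. axis i (1::real) = vec3 a \<and> - axis i (1::real) = vec3 (ing a)"
proof -
  have "i = 1 \<or> i = 2 \<or> i = 3" by (rule exhaust_3)
  then show ?thesis
    by (auto simp: U6_def vec_eq_iff forall_3 vec3_comp axis_def)
qed

lemma ing_U6: "a \<in> set U6 \<Longrightarrow> ing a \<in> set U6"
  by (auto simp: U6_def)

lemma vert_U6: "v \<in> oct_vertices \<Longrightarrow> \<exists>a\<in>set U6. v = sqrt 2 *\<^sub>R vec3 a"
proof -
  assume "v \<in> oct_vertices"
  then obtain i where "v = sqrt 2 *\<^sub>R axis i 1 \<or> v = - (sqrt 2 *\<^sub>R axis i 1)"
    unfolding oct_vertices_def by auto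
  moreover obtain a where "a \<in> set U6" "axis i (1::real) = vec3 a" "- axis i (1::real) = vec3 (ing a)"
    using axis_vec3 by blast
  ultimately show ?thesis using ing_U6
    by (metis scaleR_minus_right)
qed

lemma vec3_inj: "vec3 a = vec3 b \<Longrightarrow> a = b"
  by (cases a; cases b) (simp add: vec_eq_iff forall_3 vec3_comp)

lemma vec3_ing: "vec3 (ing a) = - vec3 a"
  by (cases a) (simp add: vec_eq_iff forall_3 vec3_comp)

lemma line_repr:
  assumes ab: "a \<in> set U6" "b \<in> set U6" "a \<noteq> b" "a \<noteq> ing b"
  shows "rotated_edge_line \<delta> (sqrt 2 *\<^sub>R vec3 a) (sqrt 2 *\<^sub>R vec3 b) =
    {(sqrt 2 / 2) *\<^sub>R vec3 (iad a b) + t *\<^sub>R ((cos \<delta> * (sqrt 2 / 2)) *\<^sub>R vec3 (isb b a) + sin \<delta> *\<^sub>R vec3 (icr a b)) | t. True}"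
proof -
  have n2: "idt (isb b a) (isb b a) = 2" using U6_norm ab by blast
  have m: "(1/2) *\<^sub>R (sqrt 2 *\<^sub>R vec3 a + sqrt 2 *\<^sub>R vec3 b) = (sqrt 2 / 2) *\<^sub>R vec3 (iad a b)"
    by (simp add: vec3_add scaleR_add_right)
  have wv: "sqrt 2 *\<^sub>R vec3 b - sqrt 2 *\<^sub>R vec3 a = sqrt 2 *\<^sub>R vec3 (isb b a)"
    by (simp add: vec3_sub scaleR_diff_right)
  have nw: "norm (sqrt 2 *\<^sub>R vec3 (isb b a)) = 2"
    using n2 by (simp add: norm_vec3)
  have u: "(1 / norm (sqrt 2 *\<^sub>R vec3 b - sqrt 2 *\<^sub>R vec3 a)) *\<^sub>R (sqrt 2 *\<^sub>R vec3 b - sqrt 2 *\<^sub>R vec3 a)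
      = (sqrt 2 / 2) *\<^sub>R vec3 (isb b a)"
    unfolding wv nw by simp
  have c: "cross3 ((sqrt 2 / 2) *\<^sub>R vec3 (iad a b)) ((sqrt 2 / 2) *\<^sub>R vec3 (isb b a)) = vec3 (icr a b)"
    by (simp add: cross_mult_left cross_mult_right vec3_cross icr_MA vec3_ism)
  show ?thesis
    unfolding rotated_edge_line_def Let_def m u c by simp
qed

definition eD :: "iv \<Rightarrow> iv \<Rightarrow> iv \<Rightarrow> iv \<Rightarrow> iv" where "eD a b c d = isb (iad a b) (iad c d)"
definition eX :: "iv \<Rightarrow> iv \<Rightarrow> iv \<Rightarrow> iv \<Rightarrow> iv" where "eX a b c d = icr (isb b a) (isb d c)"
definition eY :: "iv \<Rightarrow> iv \<Rightarrow> iv \<Rightarrow> iv \<Rightarrow> iv" where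
  "eY a b c d = iad (icr (isb b a) (icr c d)) (icr (icr a b) (isb d c))"
definition eZ :: "iv \<Rightarrow> iv \<Rightarrow> iv \<Rightarrow> iv \<Rightarrow> iv" where "eZ a b c d = icr (icr a b) (icr c d)"

lemma cross_expand:
  fixes \<alpha> \<beta> :: real
  shows "cross3 (\<alpha> *\<^sub>R vec3 (isb b a) + \<beta> *\<^sub>R vec3 (icr a b)) (\<alpha> *\<^sub>R vec3 (isb d c) + \<beta> *\<^sub>R vec3 (icr c d))
    = (\<alpha>*\<alpha>) *\<^sub>R vec3 (eX a b c d) + (\<alpha>*\<beta>) *\<^sub>R vec3 (eY a b c d) + (\<beta>*\<beta>) *\<^sub>R vec3 (eZ a b c d)"
  by (simp add: eX_def eY_def eZ_def cross_add_left cross_add_right cross_mult_left cross_mult_right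
      vec3_cross vec3_add scaleR_add_right algebra_simps)

lemma key_dot:
  fixes \<alpha> \<beta> \<gamma> :: real
  shows "(\<gamma> *\<^sub>R vec3 (iad a b) - \<gamma> *\<^sub>R vec3 (iad c d)) \<bullet>
      cross3 (\<alpha> *\<^sub>R vec3 (isb b a) + \<beta> *\<^sub>R vec3 (icr a b)) (\<alpha> *\<^sub>R vec3 (isb d c) + \<beta> *\<^sub>R vec3 (icr c d))
    = \<gamma> * (\<alpha>^2 * idt (eD a b c d) (eX a b c d) + \<alpha>*\<beta> * idt (eD a b c d) (eY a b c d)
          + \<beta>^2 * idt (eD a b c d) (eZ a b c d))"
proof -
  have "\<gamma> *\<^sub>R vec3 (iad a b) - \<gamma> *\<^sub>R vec3 (iad c d) = \<gamma> *\<^sub>R vec3 (eD a b c d)"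
    by (simp add: eD_def vec3_sub scaleR_diff_right)
  then show ?thesis
    unfolding cross_expand
    by (simp add: inner_add_right vec3_inner power2_eq_square algebra_simps)
qed

lemma key_nn:
  fixes \<alpha> \<beta> :: real and a b c d :: iv
  defines "n \<equiv> cross3 (\<alpha> *\<^sub>R vec3 (isb b a) + \<beta> *\<^sub>R vec3 (icr a b)) (\<alpha> *\<^sub>R vec3 (isb d c) + \<beta> *\<^sub>R vec3 (icr c d))"
  shows "n \<bullet> n = \<alpha>^4 * idt (eX a b c d) (eX a b c d) + \<alpha>^2*\<beta>^2 * idt (eY a b c d) (eY a b c d)
     + \<beta>^4 * idt (eZ a b c d) (eZ a b c d) + 2*\<alpha>^3*\<beta> * idt (eX a b c d) (eY a b c d)
     + 2*\<alpha>^2*\<beta>^2 * idt (eX a b c d) (eZ a b c d) + 2*\<alpha>*\<beta>^3 * idt (eY a b c d) (eZ a b c d)"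
proof -
  have s1: "idt (eY a b c d) (eX a b c d) = idt (eX a b c d) (eY a b c d)"
       "idt (eZ a b c d) (eX a b c d) = idt (eX a b c d) (eZ a b c d)"
       "idt (eZ a b c d) (eY a b c d) = idt (eY a b c d) (eZ a b c d)"
    by (metis inner_commute vec3_inner of_int_eq_iff)+
  show ?thesis
    unfolding n_def cross_expand
    by (simp add: inner_add_right inner_add_left vec3_inner s1 power2_eq_square power3_eq_cube power4_eq_xxxx algebra_simps)
qed

definition lo :: "int \<Rightarrow> int \<Rightarrow> int \<Rightarrow> int" where
  "lo a l h = (if a \<ge> 0 then a * l else a * h)"

definition LBint :: "int \<Rightarrow> int \<Rightarrow> int \<Rightarrow> int \<Rightarrow> int" where
  "LBint A0 A1 B0 B1 = A0 * 10^13 + lo A1 17320508 17320509 * 10^6 + lo B0 963433 963434 * 10^7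
     + lo B1 (17320508 * 963433) (17320509 * 963434)"

definition crit :: "iv \<Rightarrow> iv \<Rightarrow> iv \<Rightarrow> iv \<Rightarrow> bool" where
  "crit a b c d = (let D = eD a b c d; X = eX a b c d; Y = eY a b c d; Z = eZ a b c d;
     i1 = idt D X; i2 = idt D Y; i3 = idt D Z;
     XX = idt X X; YY = idt Y Y; ZZ = idt Z Z; XY = idt X Y; XZ = idt X Z; YZ = idt Y Z
   in LBint (28*i1^2 - 96*i1*i3 - 48*i2^2 + 84*i3^2 - 208*XX + 360*YY - 624*ZZ + 720*XZ)
        (-16*i1^2 + 56*i1*i3 + 28*i2^2 - 48*i3^2 + 120*XX - 208*YY + 360*ZZ - 416*XZ)
        (-20*i1*i2 + 36*i2*i3 + 152*XY - 264*YZ) (12*i1*i2 - 20*i2*i3 - 88*XY + 152*YZ) \<ge> 0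
    \<and> LBint (28*XX - 48*YY + 84*ZZ - 96*XZ) (-16*XX + 28*YY - 48*ZZ + 56*XZ)
        (-20*XY + 36*YZ) (12*XY - 20*YZ) > 0)"

lemma crit_all: "\<forall>a\<in>set U6. \<forall>b\<in>set U6. \<forall>c\<in>set U6. \<forall>d\<in>set U6.
   a \<noteq> b \<and> a \<noteq> ing b \<and> c \<noteq> d \<and> c \<noteq> ing d \<and> \<not> ((a = c \<and> b = d) \<or> (a = d \<and> b = c)) \<longrightarrow> crit a b c d"
  by code_simp

lemma lo_bound:
  fixes x S :: real
  assumes "of_int l / S \<le> x" "x \<le> of_int h / S" "S > 0"
  shows "of_int (lo a l h) / S \<le> of_int a * x"
proof (cases "a \<ge> 0")
  case True
  then have "of_int a * (of_int l / S) \<le> of_int a * x" using assms(1) by (intro mult_left_mono) auto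
  then show ?thesis using True by (simp add: lo_def)
next
  case False
  then have "of_int a * (of_int h / S) \<le> of_int a * x" using assms(2) by (intro mult_left_mono_neg) auto
  then show ?thesis using False by (simp add: lo_def)
qed

lemma LB_real:
  fixes q \<sigma> :: real
  assumes q: "17320508 / 10^7 \<le> q" "q \<le> 17320509 / 10^7"
    and s: "963433 / 10^6 \<le> \<sigma>" "\<sigma> \<le> 963434 / 10^6"
    and qs: "(17320508 * 963433) / 10^13 \<le> q * \<sigma>" "q * \<sigma> \<le> (17320509 * 963434) / 10^13"
  shows "of_int (LBint A0 A1 B0 B1) / 10^13 \<le> of_int A0 + of_int A1 * q + of_int B0 * \<sigma> + of_int B1 * (q * \<sigma>)"
proof -
  have 1: "of_int (lo A1 17320508 17320509) / 10^7 \<le> of_int A1 * q"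
    by (rule lo_bound) (use q in auto)
  have 2: "of_int (lo B0 963433 963434) / 10^6 \<le> of_int B0 * \<sigma>"
    by (rule lo_bound) (use s in auto)
  have 3: "of_int (lo B1 (17320508 * 963433) (17320509 * 963434)) / 10^13 \<le> of_int B1 * (q * \<sigma>)"
    by (rule lo_bound) (use qs in auto)
  show ?thesis using 1 2 3 unfolding LBint_def by (simp add: field_simps)
qed

lemma certF: fixes q \<sigma> i1 i2 i3 XX YY ZZ XY XZ YZ :: real
  shows "((q - 1)^2*i1 + (q - 1)*\<sigma>*i2 + \<sigma>^2*i3)^2 - 2*(2-q)*((q - 1)^4*XX + (q - 1)^2*\<sigma>^2*YY + \<sigma>^4*ZZ + 2*(q - 1)^3*\<sigma>*XY + 2*(q - 1)^2*\<sigma>^2*XZ + 2*(q - 1)*\<sigma>^3*YZ) = (-208*XX + 120*XX*q - 88*XY*q*\<sigma> + 152*XY*\<sigma> + 720*XZ - 416*XZ*q + 360*YY - 208*YY*q + 152*YZ*q*\<sigma> - 264*YZ*\<sigma> - 624*ZZ + 360*ZZ*q + 12*i1*i2*q*\<sigma> - 20*i1*i2*\<sigma> - 96*i1*i3 + 56*i1*i3*q + 28*i1^2 - 16*i1^2*q - 20*i2*i3*q*\<sigma> + 36*i2*i3*\<sigma> - 48*i2^2 + 28*i2^2*q + 84*i3^2 - 48*i3^2*q) + (q^2 - 3)*(-68*XX + 34*XX*q - 12*XX*q^2 + 2*XX*q^3 - 20*XY*q*\<sigma> + 4*XY*q^2*\<sigma> + 48*XY*\<sigma> + 224*XZ - 88*XZ*q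 + 16*XZ*q^2 + 112*YY - 44*YY*q + 8*YY*q^2 + 16*YZ*q*\<sigma> - 72*YZ*\<sigma> - 160*ZZ + 32*ZZ*q + 2*i1*i2*q*\<sigma> - 6*i1*i2*\<sigma> - 28*i1*i3 + 8*i1*i3*q + 9*i1^2 - 4*i1^2*q + 1*i1^2*q^2 + 8*i2*i3*\<sigma> - 14*i2^2 + 4*i2^2*q + 16*i3^2) + (\<sigma>^2 - (4*q - 6))*(-8*XZ + 20*XZ*q - 16*XZ*q^2 + 4*XZ*q^3 - 4*YY + 10*YY*q - 8*YY*q^2 + 2*YY*q^3 - 12*YZ*q*\<sigma> + 4*YZ*q^2*\<sigma> + 8*YZ*\<sigma> + 24*ZZ - 28*ZZ*q + 2*ZZ*q*\<sigma>^2 + 8*ZZ*q^2 - 4*ZZ*\<sigma>^2 + 2*i1*i3 - 4*i1*i3*q + 2*i1*i3*q^2 + 2*i2*i3*q*\<sigma> - 2*i2*i3*\<sigma> + 1*i2^2 - 2*i2^2*q + 1*i2^2*q^2 - 6*i3^2 + 4*i3^2*q + 1*i3^2*\<sigma>^2)"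
  by (simp add: algebra_simps power2_eq_square power3_eq_cube power4_eq_xxxx)
lemma certQ: fixes q \<sigma> i1 i2 i3 XX YY ZZ XY XZ YZ :: real
  shows "((q - 1)^4*XX + (q - 1)^2*\<sigma>^2*YY + \<sigma>^4*ZZ + 2*(q - 1)^3*\<sigma>*XY + 2*(q - 1)^2*\<sigma>^2*XZ + 2*(q - 1)*\<sigma>^3*YZ) = (28*XX - 16*XX*q + 12*XY*q*\<sigma> - 20*XY*\<sigma> - 96*XZ + 56*XZ*q - 48*YY + 28*YY*q - 20*YZ*q*\<sigma> + 36*YZ*\<sigma> + 84*ZZ - 48*ZZ*q) + (q^2 - 3)*(9*XX - 4*XX*q + 1*XX*q^2 + 2*XY*q*\<sigma> - 6*XY*\<sigma> - 28*XZ + 8*XZ*q - 14*YY + 4*YY*q + 8*YZ*\<sigma> + 16*ZZ) + (\<sigma>^2 - (4*q - 6))*(2*XZ - 4*XZ*q + 2*XZ*q^2 + 1*YY - 2*YY*q + 1*YY*q^2 + 2*YZ*q*\<sigma> - 2*YZ*\<sigma> - 6*ZZ + 4*ZZ*q + 1*ZZ*\<sigma>^2)"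
  by (simp add: algebra_simps power2_eq_square power3_eq_cube power4_eq_xxxx)

lemma F_identity:
  fixes q \<sigma> i1 i2 i3 XX YY ZZ XY XZ YZ :: real
  assumes "q^2 = 3" "\<sigma>^2 = 4*q - 6"
  shows "((q - 1)^2*i1 + (q - 1)*\<sigma>*i2 + \<sigma>^2*i3)^2 - 2*(2-q)*((q - 1)^4*XX + (q - 1)^2*\<sigma>^2*YY + \<sigma>^4*ZZ + 2*(q - 1)^3*\<sigma>*XY + 2*(q - 1)^2*\<sigma>^2*XZ + 2*(q - 1)*\<sigma>^3*YZ)
   = (28*i1^2 - 96*i1*i3 - 48*i2^2 + 84*i3^2 - 208*XX + 360*YY - 624*ZZ + 720*XZ)
   + (-16*i1^2 + 56*i1*i3 + 28*i2^2 - 48*i3^2 + 120*XX - 208*YY + 360*ZZ - 416*XZ) * q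
   + (-20*i1*i2 + 36*i2*i3 + 152*XY - 264*YZ) * \<sigma> + (12*i1*i2 - 20*i2*i3 - 88*XY + 152*YZ) * (q*\<sigma>)"
  unfolding certF using assms by (simp add: algebra_simps)

lemma Q_identity:
  fixes q \<sigma> XX YY ZZ XY XZ YZ :: real
  assumes "q^2 = 3" "\<sigma>^2 = 4*q - 6"
  shows "(q - 1)^4*XX + (q - 1)^2*\<sigma>^2*YY + \<sigma>^4*ZZ + 2*(q - 1)^3*\<sigma>*XY + 2*(q - 1)^2*\<sigma>^2*XZ + 2*(q - 1)*\<sigma>^3*YZ
   = (28*XX - 48*YY + 84*ZZ - 96*XZ) + (-16*XX + 28*YY - 48*ZZ + 56*XZ) * q
   + (-20*XY + 36*YZ) * \<sigma> + (12*XY - 20*YZ) * (q*\<sigma>)"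
  unfolding certQ using assms by (simp add: algebra_simps)

lemma nn_scale:
  fixes x y h A B C D E F :: real
  shows "(x*h)^4 * A + (x*h)^2*(y*h)^2 * B + (y*h)^4 * C + 2*(x*h)^3*(y*h) * D + 2*(x*h)^2*(y*h)^2 * E + 2*(x*h)*(y*h)^3 * F
    = h^4 * (x^4*A + x^2*y^2*B + y^4*C + 2*x^3*y*D + 2*x^2*y^2*E + 2*x*y^3*F)"
proof -
  have e: "(x*h)^4 = h^4*x^4" "(x*h)^2*(y*h)^2 = h^4*(x^2*y^2)" "(y*h)^4 = h^4*y^4"
    "2*(x*h)^3*(y*h) = h^4*(2*x^3*y)" "2*(x*h)^2*(y*h)^2 = h^4*(2*x^2*y^2)" "2*(x*h)*(y*h)^3 = h^4*(2*x*y^3)"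
    by (simp_all add: eval_nat_numeral mult_ac)
  show ?thesis unfolding e by (simp add: distrib_left mult_ac)
qed

lemma lower_pair:
  fixes \<delta> q \<sigma> :: real and a b c d :: iv
  assumes q2: "q^2 = 3" and s2: "\<sigma>^2 = 4*q - 6"
    and qb: "17320508 / 10^7 \<le> q" "q \<le> 17320509 / 10^7"
    and sb: "963433 / 10^6 \<le> \<sigma>" "\<sigma> \<le> 963434 / 10^6"
    and qsb: "(17320508 * 963433) / 10^13 \<le> q * \<sigma>" "q * \<sigma> \<le> (17320509 * 963434) / 10^13"
    and cd: "cos \<delta> = q - 1" and sd: "sin \<delta> = \<sigma> * (sqrt 2 / 2)"
    and ab: "a \<in> set U6" "b \<in> set U6" "a \<noteq> b" "a \<noteq> ing b"
    and cdv: "c \<in> set U6" "d \<in> set U6" "c \<noteq> d" "c \<noteq> ing d"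
    and ne: "\<not> ((a = c \<and> b = d) \<or> (a = d \<and> b = c))"
  shows "sqrt (2 - q) \<le> setdist (rotated_edge_line \<delta> (sqrt 2 *\<^sub>R vec3 a) (sqrt 2 *\<^sub>R vec3 b))
                                  (rotated_edge_line \<delta> (sqrt 2 *\<^sub>R vec3 c) (sqrt 2 *\<^sub>R vec3 d))"
proof -
  have cr: "crit a b c d" using crit_all ab cdv ne by blast
  define h :: real where "h = sqrt 2 / 2"
  have h2: "h^2 = 1/2" unfolding h_def by (simp add: power_divide)
  define \<alpha> where "\<alpha> = cos \<delta> * h"
  define \<beta> where "\<beta> = sin \<delta>"
  have \<alpha>: "\<alpha> = (q - 1) * h" unfolding \<alpha>_def cd ..
  have \<beta>: "\<beta> = \<sigma> * h" unfolding \<beta>_def sd h_def ..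
  define n where "n = cross3 (\<alpha> *\<^sub>R vec3 (isb b a) + \<beta> *\<^sub>R vec3 (icr a b)) (\<alpha> *\<^sub>R vec3 (isb d c) + \<beta> *\<^sub>R vec3 (icr c d))"
  define j1 where "j1 = idt (eD a b c d) (eX a b c d)"
  define j2 where "j2 = idt (eD a b c d) (eY a b c d)"
  define j3 where "j3 = idt (eD a b c d) (eZ a b c d)"
  define jXX where "jXX = idt (eX a b c d) (eX a b c d)"
  define jYY where "jYY = idt (eY a b c d) (eY a b c d)"
  define jZZ where "jZZ = idt (eZ a b c d) (eZ a b c d)"
  define jXY where "jXY = idt (eX a b c d) (eY a b c d)"
  define jXZ where "jXZ = idt (eX a b c d) (eZ a b c d)"
  define jYZ where "jYZ = idt (eY a b c d) (eZ a b c d)"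
  define G where "G = (q - 1)^2*j1 + (q - 1)*\<sigma>*j2 + \<sigma>^2*j3"
  define Q where "Q = (q - 1)^4*jXX + (q - 1)^2*\<sigma>^2*jYY + \<sigma>^4*jZZ + 2*(q - 1)^3*\<sigma>*jXY + 2*(q - 1)^2*\<sigma>^2*jXZ + 2*(q - 1)*\<sigma>^3*jYZ"
  have dot: "(h *\<^sub>R vec3 (iad a b) - h *\<^sub>R vec3 (iad c d)) \<bullet> n = h^3 * G"
  proof -
    have "(h *\<^sub>R vec3 (iad a b) - h *\<^sub>R vec3 (iad c d)) \<bullet> n = h * (\<alpha>^2 * j1 + \<alpha>*\<beta> * j2 + \<beta>^2 * j3)"
      unfolding n_def j1_def j2_def j3_def by (rule key_dot)
    also have "\<dots> = h^3 * G" unfolding \<alpha> \<beta> G_def by (simp add: power_mult_distrib algebra_simps power2_eq_square power3_eq_cube)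
    finally show ?thesis .
  qed
  have nn: "n \<bullet> n = h^4 * Q"
  proof -
    have "n \<bullet> n = \<alpha>^4 * jXX + \<alpha>^2*\<beta>^2 * jYY + \<beta>^4 * jZZ + 2*\<alpha>^3*\<beta> * jXY + 2*\<alpha>^2*\<beta>^2 * jXZ + 2*\<alpha>*\<beta>^3 * jYZ"
      unfolding n_def jXX_def jYY_def jZZ_def jXY_def jXZ_def jYZ_def by (rule key_nn)
    also have "\<dots> = h^4 * Q" unfolding \<alpha> \<beta> Q_def by (rule nn_scale)
    finally show ?thesis .
  qed
  have h4: "h^4 = 1/4"
  proof -
    have "h^4 = (h^2)^2" by (simp flip: power_mult)
    then show ?thesis unfolding h2 by (simp add: power2_eq_square)
  qed
  have h6: "(h^3)^2 = 1/8"
  proof -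
    have "(h^3)^2 = (h^2)^3" by (simp flip: power_mult)
    then show ?thesis unfolding h2 by (simp add: power3_eq_cube)
  qed
  have crF: "0 \<le> LBint (28*j1^2 - 96*j1*j3 - 48*j2^2 + 84*j3^2 - 208*jXX + 360*jYY - 624*jZZ + 720*jXZ)
        (-16*j1^2 + 56*j1*j3 + 28*j2^2 - 48*j3^2 + 120*jXX - 208*jYY + 360*jZZ - 416*jXZ)
        (-20*j1*j2 + 36*j2*j3 + 152*jXY - 264*jYZ) (12*j1*j2 - 20*j2*j3 - 88*jXY + 152*jYZ)"
   and crQ: "0 < LBint (28*jXX - 48*jYY + 84*jZZ - 96*jXZ) (-16*jXX + 28*jYY - 48*jZZ + 56*jXZ)
        (-20*jXY + 36*jYZ) (12*jXY - 20*jYZ)"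
    using cr unfolding crit_def Let_def j1_def j2_def j3_def jXX_def jYY_def jZZ_def jXY_def jXZ_def jYZ_def by auto
  have Fge: "G^2 - 2*(2-q)*Q \<ge> 0"
  proof -
    have "G^2 - 2*(2-q)*Q = of_int (28*j1^2 - 96*j1*j3 - 48*j2^2 + 84*j3^2 - 208*jXX + 360*jYY - 624*jZZ + 720*jXZ)
        + of_int (-16*j1^2 + 56*j1*j3 + 28*j2^2 - 48*j3^2 + 120*jXX - 208*jYY + 360*jZZ - 416*jXZ) * q
        + of_int (-20*j1*j2 + 36*j2*j3 + 152*jXY - 264*jYZ) * \<sigma> + of_int (12*j1*j2 - 20*j2*j3 - 88*jXY + 152*jYZ) * (q * \<sigma>)"
      unfolding G_def Q_def F_identity[OF q2 s2] by simp
    also have "\<dots> \<ge> of_int (LBint (28*j1^2 - 96*j1*j3 - 48*j2^2 + 84*j3^2 - 208*jXX + 360*jYY - 624*jZZ + 720*jXZ)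
        (-16*j1^2 + 56*j1*j3 + 28*j2^2 - 48*j3^2 + 120*jXX - 208*jYY + 360*jZZ - 416*jXZ)
        (-20*j1*j2 + 36*j2*j3 + 152*jXY - 264*jYZ) (12*j1*j2 - 20*j2*j3 - 88*jXY + 152*jYZ)) / 10^13"
      by (rule LB_real[OF qb sb qsb])
    finally have "G^2 - 2*(2-q)*Q \<ge> of_int (LBint (28*j1^2 - 96*j1*j3 - 48*j2^2 + 84*j3^2 - 208*jXX + 360*jYY - 624*jZZ + 720*jXZ)
        (-16*j1^2 + 56*j1*j3 + 28*j2^2 - 48*j3^2 + 120*jXX - 208*jYY + 360*jZZ - 416*jXZ)
        (-20*j1*j2 + 36*j2*j3 + 152*jXY - 264*jYZ) (12*j1*j2 - 20*j2*j3 - 88*jXY + 152*jYZ)) / 10^13" .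
    moreover have "0 \<le> (of_int (LBint (28*j1^2 - 96*j1*j3 - 48*j2^2 + 84*j3^2 - 208*jXX + 360*jYY - 624*jZZ + 720*jXZ)
        (-16*j1^2 + 56*j1*j3 + 28*j2^2 - 48*j3^2 + 120*jXX - 208*jYY + 360*jZZ - 416*jXZ)
        (-20*j1*j2 + 36*j2*j3 + 152*jXY - 264*jYZ) (12*j1*j2 - 20*j2*j3 - 88*jXY + 152*jYZ)) :: real) / 10^13"
      using crF by simp
    ultimately show ?thesis by linarith
  qed
  have Qgt: "Q > 0"
  proof -
    have "Q = of_int (28*jXX - 48*jYY + 84*jZZ - 96*jXZ) + of_int (-16*jXX + 28*jYY - 48*jZZ + 56*jXZ) * q
        + of_int (-20*jXY + 36*jYZ) * \<sigma> + of_int (12*jXY - 20*jYZ) * (q * \<sigma>)"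
      unfolding Q_def Q_identity[OF q2 s2] by simp
    also have "\<dots> \<ge> of_int (LBint (28*jXX - 48*jYY + 84*jZZ - 96*jXZ) (-16*jXX + 28*jYY - 48*jZZ + 56*jXZ)
        (-20*jXY + 36*jYZ) (12*jXY - 20*jYZ)) / 10^13"
      by (rule LB_real[OF qb sb qsb])
    finally have "Q \<ge> of_int (LBint (28*jXX - 48*jYY + 84*jZZ - 96*jXZ) (-16*jXX + 28*jYY - 48*jZZ + 56*jXZ)
        (-20*jXY + 36*jYZ) (12*jXY - 20*jYZ)) / 10^13" .
    moreover have "0 < (of_int (LBint (28*jXX - 48*jYY + 84*jZZ - 96*jXZ) (-16*jXX + 28*jYY - 48*jZZ + 56*jXZ)
        (-20*jXY + 36*jYZ) (12*jXY - 20*jYZ)) :: real) / 10^13"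
      using crQ by simp
    ultimately show ?thesis by linarith
  qed
  have nz: "n \<noteq> 0"
  proof
    assume "n = 0"
    then have "n \<bullet> n = 0" by simp
    with nn Qgt h4 show False by simp
  qed
  have ineq: "((h *\<^sub>R vec3 (iad a b) - h *\<^sub>R vec3 (iad c d)) \<bullet> n)^2 \<ge> (2 - q) * (n \<bullet> n)"
  proof -
    have "((h *\<^sub>R vec3 (iad a b) - h *\<^sub>R vec3 (iad c d)) \<bullet> n)^2 = G^2 / 8"
      unfolding dot power_mult_distrib h6 by simp
    moreover have "(2 - q) * (n \<bullet> n) = 2*(2-q)*Q / 8" unfolding nn h4 by simp
    ultimately show ?thesis using Fge by simp
  qed
  have K0: "2 - q \<ge> 0" using qb by simp
  have L: "sqrt (2 - q) \<le> setdist {h *\<^sub>R vec3 (iad a b) + t *\<^sub>R (\<alpha> *\<^sub>R vec3 (isb b a) + \<beta> *\<^sub>R vec3 (icr a b)) | t. True}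
     {h *\<^sub>R vec3 (iad c d) + t *\<^sub>R (\<alpha> *\<^sub>R vec3 (isb d c) + \<beta> *\<^sub>R vec3 (icr c d)) | t. True}"
    by (rule line_lower[OF nz[unfolded n_def] K0 ineq[unfolded n_def]])
  show ?thesis using L unfolding line_repr[OF ab] line_repr[OF cdv] \<alpha>_def \<beta>_def h_def .
qed

lemma dO_facts:
  defines "r \<equiv> root 4 3" and "q \<equiv> sqrt 3"
  defines "\<delta>O \<equiv> arctan (r / sqrt 2)" and "\<sigma> \<equiv> r * (q - 1)"
  shows "q^2 = 3" "\<sigma>^2 = 4*q - 6" "cos \<delta>O = q - 1" "sin \<delta>O = \<sigma> * (sqrt 2 / 2)"
    "17320508 / 10^7 \<le> q" "q \<le> 17320509 / 10^7"
    "963433 / 10^6 \<le> \<sigma>" "\<sigma> \<le> 963434 / 10^6"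
    "(17320508 * 963433) / 10^13 \<le> q * \<sigma>" "q * \<sigma> \<le> (17320509 * 963434) / 10^13"
    "\<delta>O \<in> {0..pi/2}"
proof -
  show q2: "q^2 = 3" unfolding q_def by simp
  have r0: "r > 0" unfolding r_def by (rule real_root_gt_zero) auto
  have r4: "r^4 = 3" unfolding r_def by (rule real_root_pow_pos) auto
  have r2: "r^2 = q"
  proof -
    have "sqrt 3 = r^2" by (rule real_sqrt_unique) (use r4 in \<open>simp_all flip: power_mult\<close>)
    then show ?thesis unfolding q_def by simp
  qed
  show ql: "17320508 / 10^7 \<le> q" unfolding q_def by (rule real_le_rsqrt) (simp add: power2_eq_square)
  have "sqrt 3 \<le> sqrt ((17320509 / 10^7)^2)" by (subst real_sqrt_le_iff) (simp add: power2_eq_square)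
  then show qh: "q \<le> 17320509 / 10^7" unfolding q_def by simp
  have q1: "(q - 1)^2 = 4 - 2*q" using q2 by (simp add: power2_eq_square algebra_simps)
  show s2: "\<sigma>^2 = 4*q - 6" unfolding \<sigma>_def power_mult_distrib r2 q1 using q2 by (simp add: power2_eq_square algebra_simps)
  have s0: "\<sigma> \<ge> 0" unfolding \<sigma>_def using r0 ql by simp
  have ss: "\<sigma> = sqrt (4*q - 6)" using s2 s0 by (simp add: real_sqrt_unique)
  show sl: "963433 / 10^6 \<le> \<sigma>" unfolding ss using ql by (intro real_le_rsqrt) (simp add: power2_eq_square)
  have "sqrt (4*q - 6) \<le> sqrt ((963434 / 10^6)^2)" using qh by (subst real_sqrt_le_iff) (simp add: power2_eq_square)
  then show sh: "\<sigma> \<le> 963434 / 10^6" unfolding ss by simp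
  show "(17320508 * 963433) / 10^13 \<le> q * \<sigma>"
  proof -
    have "(17320508 / 10^7) * (963433 / 10^6) \<le> q * \<sigma>" by (rule mult_mono[OF ql sl]) (use ql in auto)
    then show ?thesis by simp
  qed
  show "q * \<sigma> \<le> (17320509 * 963434) / 10^13"
  proof -
    have "q * \<sigma> \<le> (17320509 / 10^7) * (963434 / 10^6)" by (rule mult_mono[OF qh sh]) (use s0 in auto)
    then show ?thesis by simp
  qed
  define x where "x = r / sqrt 2"
  have pos: "4 - 2*q > 0" using qh by simp
  have pr: "(2+q)*(4-2*q) = 8 - 2*q^2" by (simp add: algebra_simps power2_eq_square)
  have pr2: "(2+q)*(4-2*q) = 2" unfolding pr q2 by simp
  have "1 + x^2 = (2 + q) / 2" unfolding x_def power_divide r2 by simp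
  also have "\<dots> = 1 / (4 - 2*q)" using pos pr2 by (simp add: field_simps)
  finally have x2: "1 + x^2 = 1 / (q - 1)^2" unfolding q1 .
  have sq: "sqrt (1 + x^2) = 1 / (q - 1)" unfolding x2 using ql by (simp add: real_sqrt_divide)
  show "cos \<delta>O = q - 1" unfolding \<delta>O_def x_def[symmetric] cos_arctan sq by simp
  show "sin \<delta>O = \<sigma> * (sqrt 2 / 2)" unfolding \<delta>O_def x_def[symmetric] sin_arctan sq
    unfolding x_def \<sigma>_def by (simp add: field_simps)
  have "0 \<le> arctan x" using r0 unfolding x_def by (metis arctan_le_iff arctan_zero_zero divide_nonneg_pos less_eq_real_def real_sqrt_gt_0_iff zero_less_numeral)
  then show "\<delta>O \<in> {0..pi/2}" unfolding \<delta>O_def x_def[symmetric] using arctan_ubound[of x] by simp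
qed

lemma line_neg: fixes m D :: "real^3"
  shows "{m + t *\<^sub>R (- D) | t. True} = {m + t *\<^sub>R D | t. True}"
proof (intro set_eqI iffI)
  fix x assume "x \<in> {m + t *\<^sub>R (- D) | t. True}"
  then obtain t where "x = m + t *\<^sub>R (- D)" by blast
  then have "x = m + (- t) *\<^sub>R D" by simp
  then show "x \<in> {m + t *\<^sub>R D | t. True}" by blast
next
  fix x assume "x \<in> {m + t *\<^sub>R D | t. True}"
  then obtain t where "x = m + t *\<^sub>R D" by blast
  then have "x = m + (- t) *\<^sub>R (- D)" by simp
  then show "x \<in> {m + t *\<^sub>R (- D) | t. True}" by blast
qed

lemma rel_swap: "rotated_edge_line \<delta> v w = rotated_edge_line \<delta> w v"
proof -
  define m where "m = (1/2) *\<^sub>R (v + w)"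
  define u where "u = (1 / norm (w - v)) *\<^sub>R (w - v)"
  have m': "(1/2) *\<^sub>R (w + v) = m" unfolding m_def by (simp add: add.commute)
  have u': "(1 / norm (v - w)) *\<^sub>R (v - w) = - u" unfolding u_def
    by (simp add: norm_minus_commute[of v w] scaleR_diff_right)
  have "rotated_edge_line \<delta> w v = {m + t *\<^sub>R (- (cos \<delta> *\<^sub>R u + sin \<delta> *\<^sub>R cross3 m u)) | t. True}"
    unfolding rotated_edge_line_def Let_def m' u' by (simp add: algebra_simps)
  also have "\<dots> = {m + t *\<^sub>R (cos \<delta> *\<^sub>R u + sin \<delta> *\<^sub>R cross3 m u) | t. True}" by (rule line_neg)
  also have "\<dots> = rotated_edge_line \<delta> v w" unfolding rotated_edge_line_def Let_def m_def u_def ..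
  finally show ?thesis ..
qed

lemma U6_vert: "a \<in> set U6 \<Longrightarrow> sqrt 2 *\<^sub>R vec3 a \<in> oct_vertices"
proof -
  assume "a \<in> set U6"
  then have "\<exists>i. vec3 a = axis i 1 \<or> vec3 a = - axis i 1"
  proof (auto simp: U6_def)
    show "\<exists>i. vec3 (1, 0, 0) = axis i 1 \<or> vec3 (1, 0, 0) = - axis i 1"
      by (rule exI[of _ 1]) (simp add: vec_eq_iff forall_3 vec3_comp axis_def)
    show "\<exists>i. vec3 (-1, 0, 0) = axis i 1 \<or> vec3 (-1, 0, 0) = - axis i 1"
      by (rule exI[of _ 1]) (simp add: vec_eq_iff forall_3 vec3_comp axis_def)
    show "\<exists>i. vec3 (0, 1, 0) = axis i 1 \<or> vec3 (0, 1, 0) = - axis i 1"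
      by (rule exI[of _ 2]) (simp add: vec_eq_iff forall_3 vec3_comp axis_def)
    show "\<exists>i. vec3 (0, -1, 0) = axis i 1 \<or> vec3 (0, -1, 0) = - axis i 1"
      by (rule exI[of _ 2]) (simp add: vec_eq_iff forall_3 vec3_comp axis_def)
    show "\<exists>i. vec3 (0, 0, 1) = axis i 1 \<or> vec3 (0, 0, 1) = - axis i 1"
      by (rule exI[of _ 3]) (simp add: vec_eq_iff forall_3 vec3_comp axis_def)
    show "\<exists>i. vec3 (0, 0, -1) = axis i 1 \<or> vec3 (0, 0, -1) = - axis i 1"
      by (rule exI[of _ 3]) (simp add: vec_eq_iff forall_3 vec3_comp axis_def)
  qed
  then obtain i where "vec3 a = axis i 1 \<or> vec3 a = - axis i 1" by blast
  then show ?thesis unfolding oct_vertices_def by auto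
qed

lemma U6_edge:
  assumes "a \<in> set U6" "b \<in> set U6" "a \<noteq> b" "a \<noteq> ing b"
  shows "(sqrt 2 *\<^sub>R vec3 a, sqrt 2 *\<^sub>R vec3 b) \<in> oct_edges"
proof -
  have 1: "sqrt 2 *\<^sub>R vec3 a \<noteq> sqrt 2 *\<^sub>R vec3 b"
  proof
    assume "sqrt 2 *\<^sub>R vec3 a = sqrt 2 *\<^sub>R vec3 b"
    then have "vec3 a = vec3 b" by simp
    then show False using assms(3) vec3_inj by blast
  qed
  have 2: "sqrt 2 *\<^sub>R vec3 a \<noteq> - (sqrt 2 *\<^sub>R vec3 b)"
  proof
    assume "sqrt 2 *\<^sub>R vec3 a = - (sqrt 2 *\<^sub>R vec3 b)"
    then have "sqrt 2 *\<^sub>R vec3 a = sqrt 2 *\<^sub>R vec3 (ing b)" by (simp add: vec3_ing)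
    then have "vec3 a = vec3 (ing b)" by simp
    then have "a = ing b" using vec3_inj by blast
    then show False using assms(4) by simp
  qed
  show ?thesis unfolding oct_edges_def using U6_vert[OF assms(1)] U6_vert[OF assms(2)] 1 2 by auto
qed

lemma lower_cfg:
  defines "\<delta>O \<equiv> arctan (root 4 3 / sqrt 2)"
  assumes l1: "l1 \<in> line_config \<delta>O" and l2: "l2 \<in> line_config \<delta>O" and ne: "l1 \<noteq> l2"
  shows "sqrt (2 - sqrt 3) \<le> setdist l1 l2"
proof -
  obtain v w where vw: "(v, w) \<in> oct_edges" "l1 = rotated_edge_line \<delta>O v w"
    using l1 unfolding line_config_def by auto
  obtain v' w' where vw': "(v', w') \<in> oct_edges" "l2 = rotated_edge_line \<delta>O v' w'"
    using l2 unfolding line_config_def by auto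
  have E: "v \<in> oct_vertices" "w \<in> oct_vertices" "v \<noteq> w" "v \<noteq> - w"
    "v' \<in> oct_vertices" "w' \<in> oct_vertices" "v' \<noteq> w'" "v' \<noteq> - w'"
    using vw(1) vw'(1) unfolding oct_edges_def by auto
  obtain a where a: "a \<in> set U6" "v = sqrt 2 *\<^sub>R vec3 a" using vert_U6[OF E(1)] by blast
  obtain b where b: "b \<in> set U6" "w = sqrt 2 *\<^sub>R vec3 b" using vert_U6[OF E(2)] by blast
  obtain c where c: "c \<in> set U6" "v' = sqrt 2 *\<^sub>R vec3 c" using vert_U6[OF E(5)] by blast
  obtain d where d: "d \<in> set U6" "w' = sqrt 2 *\<^sub>R vec3 d" using vert_U6[OF E(6)] by blast
  have ab: "a \<noteq> b" using E(3) a b by auto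
  have cd: "c \<noteq> d" using E(7) c d by auto
  have abn: "a \<noteq> ing b" using E(4) a b by (auto simp: vec3_ing)
  have cdn: "c \<noteq> ing d" using E(8) c d by (auto simp: vec3_ing)
  have nsame: "\<not> ((a = c \<and> b = d) \<or> (a = d \<and> b = c))"
  proof
    assume "(a = c \<and> b = d) \<or> (a = d \<and> b = c)"
    then have "l1 = l2" using vw(2) vw'(2) a b c d rel_swap by metis
    then show False using ne by simp
  qed
  note F = dO_facts
  have "sqrt (2 - sqrt 3) \<le> setdist (rotated_edge_line \<delta>O (sqrt 2 *\<^sub>R vec3 a) (sqrt 2 *\<^sub>R vec3 b))
                                  (rotated_edge_line \<delta>O (sqrt 2 *\<^sub>R vec3 c) (sqrt 2 *\<^sub>R vec3 d))"
    unfolding \<delta>O_def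
    by (rule lower_pair[OF F(1) F(2) F(5) F(6) F(7) F(8) F(9) F(10) F(3) F(4) a(1) b(1) ab abn c(1) d(1) cd cdn nsame])
  then show ?thesis using vw(2) vw'(2) a b c d by simp
qed

definition LA1 :: "real \<Rightarrow> (real^3) set" where
  "LA1 \<delta> = rotated_edge_line \<delta> (sqrt 2 *\<^sub>R vec3 (1,0,0)) (sqrt 2 *\<^sub>R vec3 (0,1,0))"
definition LA2 :: "real \<Rightarrow> (real^3) set" where
  "LA2 \<delta> = rotated_edge_line \<delta> (sqrt 2 *\<^sub>R vec3 (1,0,0)) (sqrt 2 *\<^sub>R vec3 (0,0,1))"

lemma A_U6: "(1,0,0) \<in> set U6" "(0,1,0) \<in> set U6" "(0,0,1) \<in> set U6"
  "((1::int),(0::int),(0::int)) \<noteq> (0,1,0)" "((1::int),(0::int),(0::int)) \<noteq> ing (0,1,0)"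
  "((1::int),(0::int),(0::int)) \<noteq> (0,0,1)" "((1::int),(0::int),(0::int)) \<noteq> ing (0,0,1)"
  by (simp_all add: U6_def)

lemma LA_in: "LA1 \<delta> \<in> line_config \<delta>" "LA2 \<delta> \<in> line_config \<delta>"
  unfolding LA1_def LA2_def line_config_def
  using U6_edge[OF A_U6(1) A_U6(2) A_U6(4) A_U6(5)] U6_edge[OF A_U6(1) A_U6(3) A_U6(6) A_U6(7)]
  by (auto intro!: image_eqI)

lemma LA_ne: "LA1 \<delta> \<noteq> LA2 \<delta>"
proof
  define h :: real where "h = sqrt 2 / 2"
  have h0: "h > 0" unfolding h_def by simp
  assume eq: "LA1 \<delta> = LA2 \<delta>"
  have "h *\<^sub>R vec3 (iad (1,0,0) (0,1,0)) + 0 *\<^sub>R ((cos \<delta> * h) *\<^sub>R vec3 (isb (0,1,0) (1,0,0)) + sin \<delta> *\<^sub>R vec3 (icr (1,0,0) (0,1,0))) \<in> LA1 \<delta>"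
    unfolding LA1_def line_repr[OF A_U6(1) A_U6(2) A_U6(4) A_U6(5)] h_def by blast
  then have "h *\<^sub>R vec3 (iad (1,0,0) (0,1,0)) \<in> LA2 \<delta>" using eq by simp
  then obtain t where t: "h *\<^sub>R vec3 (iad (1,0,0) (0,1,0)) = h *\<^sub>R vec3 (iad (1,0,0) (0,0,1)) + t *\<^sub>R ((cos \<delta> * h) *\<^sub>R vec3 (isb (0,0,1) (1,0,0)) + sin \<delta> *\<^sub>R vec3 (icr (1,0,0) (0,0,1)))"
    unfolding LA2_def line_repr[OF A_U6(1) A_U6(3) A_U6(6) A_U6(7)] h_def[symmetric] by blast
  have c1: "h = h - t * (cos \<delta> * h)" using arg_cong[OF t, of "\<lambda>x. x $ 1"] by (simp add: vec3_comp)
  have c3: "0 = h + t * (cos \<delta> * h)" using arg_cong[OF t, of "\<lambda>x. x $ 3"] by (simp add: vec3_comp)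
  from c1 c3 h0 show False by linarith
qed

lemma pairA_upper: "setdist (LA1 \<delta>) (LA2 \<delta>) \<le> sqrt (2 - sqrt 3)"
proof -
  define h :: real where "h = sqrt 2 / 2"
  have h2: "h^2 = 1/2" unfolding h_def by (simp add: power_divide)
  define \<alpha> where "\<alpha> = cos \<delta> * h"
  define \<beta> where "\<beta> = sin \<delta>"
  define a :: iv where "a = (1,0,0)"
  define b :: iv where "b = (0,1,0)"
  define d :: iv where "d = (0,0,1)"
  define n where "n = cross3 (\<alpha> *\<^sub>R vec3 (isb b a) + \<beta> *\<^sub>R vec3 (icr a b)) (\<alpha> *\<^sub>R vec3 (isb d a) + \<beta> *\<^sub>R vec3 (icr a d))"
  have dot0: "(h *\<^sub>R vec3 (iad a b) - h *\<^sub>R vec3 (iad a d)) \<bullet> n = h * (\<alpha>^2 * idt (eD a b a d) (eX a b a d) + \<alpha>*\<beta> * idt (eD a b a d) (eY a b a d)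
          + \<beta>^2 * idt (eD a b a d) (eZ a b a d))"
    unfolding n_def by (rule key_dot)
  have dot: "(h *\<^sub>R vec3 (iad a b) - h *\<^sub>R vec3 (iad a d)) \<bullet> n = - 2 * h * \<alpha> * \<beta>"
    unfolding dot0 by (simp add: a_def b_def d_def eD_def eX_def eY_def eZ_def)
  have nn0: "n \<bullet> n = \<alpha>^4 * idt (eX a b a d) (eX a b a d) + \<alpha>^2*\<beta>^2 * idt (eY a b a d) (eY a b a d)
     + \<beta>^4 * idt (eZ a b a d) (eZ a b a d) + 2*\<alpha>^3*\<beta> * idt (eX a b a d) (eY a b a d)
     + 2*\<alpha>^2*\<beta>^2 * idt (eX a b a d) (eZ a b a d) + 2*\<alpha>*\<beta>^3 * idt (eY a b a d) (eZ a b a d)"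
    unfolding n_def by (rule key_nn)
  define A where "A = \<alpha>^2"
  define B where "B = \<beta>^2"
  have nn: "n \<bullet> n = 3*A^2 + 4*A*B + B^2"
    unfolding nn0 A_def B_def by (simp add: a_def b_def d_def eD_def eX_def eY_def eZ_def power2_eq_square power4_eq_xxxx)
  have AB: "B = 1 - 2*A"
  proof -
    have "A = (cos \<delta>)^2 / 2" unfolding A_def \<alpha>_def power_mult_distrib h2 by simp
    moreover have "B = 1 - (cos \<delta>)^2" unfolding B_def \<beta>_def by (rule sin_squared_eq)
    ultimately show ?thesis by simp
  qed
  have A0: "A \<ge> 0" unfolding A_def by simp
  have B0: "B \<ge> 0" unfolding B_def by simp
  have Npos: "n \<bullet> n > 0"
  proof -
    have "3*A^2 + 4*A*B + B^2 > 0"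
    proof (cases "A = 0")
      case True then show ?thesis using AB by simp
    next
      case False then have "A^2 > 0" using A0 by simp
      moreover have "4*A*B \<ge> 0" using A0 B0 by simp
      moreover have "B^2 \<ge> 0" by simp
      ultimately show ?thesis by linarith
    qed
    then show ?thesis unfolding nn .
  qed
  define q where "q = sqrt 3"
  have q2: "q^2 = 3" unfolding q_def by simp
  have q0: "q \<ge> 0" unfolding q_def by simp
  have sq: "(2+q)*((2+q)*A^2 - 2*A + (2-q)) = ((2+q)*A - 1)^2"
  proof -
    have "(2+q)*((2+q)*A^2 - 2*A + (2-q)) = ((2+q)*A - 1)^2 + (3 - q^2)"
      by (simp add: algebra_simps power2_eq_square)
    then show ?thesis unfolding q2 by simp
  qed
  have pq: "(2+q)*A^2 - 2*A + (2-q) \<ge> 0"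
  proof -
    have "(2+q)*((2+q)*A^2 - 2*A + (2-q)) \<ge> 0" unfolding sq by simp
    moreover have "2 + q > 0" using q0 by simp
    ultimately show ?thesis by (simp add: zero_le_mult_iff)
  qed
  have diff: "(2-q)*(3*A^2 + 4*A*B + B^2) - 2*A*B = (2+q)*A^2 - 2*A + (2-q)"
    unfolding AB by (simp add: algebra_simps power2_eq_square)
  have dot2: "((h *\<^sub>R vec3 (iad a b) - h *\<^sub>R vec3 (iad a d)) \<bullet> n)^2 = 2*A*B"
    unfolding dot A_def B_def by (simp add: power_mult_distrib h2)
  have ineq: "((h *\<^sub>R vec3 (iad a b) - h *\<^sub>R vec3 (iad a d)) \<bullet> n)^2 \<le> (2 - q) * (n \<bullet> n)"
    unfolding dot2 nn using diff pq by linarith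
  have nz: "n \<noteq> 0" using Npos by auto
  have up: "setdist {h *\<^sub>R vec3 (iad a b) + t *\<^sub>R (\<alpha> *\<^sub>R vec3 (isb b a) + \<beta> *\<^sub>R vec3 (icr a b)) | t. True}
     {h *\<^sub>R vec3 (iad a d) + t *\<^sub>R (\<alpha> *\<^sub>R vec3 (isb d a) + \<beta> *\<^sub>R vec3 (icr a d)) | t. True}
     \<le> \<bar>(h *\<^sub>R vec3 (iad a b) - h *\<^sub>R vec3 (iad a d)) \<bullet> n\<bar> / norm n"
    unfolding n_def by (rule line_upper[OF nz[unfolded n_def]])
  have "\<bar>(h *\<^sub>R vec3 (iad a b) - h *\<^sub>R vec3 (iad a d)) \<bullet> n\<bar> / norm n
      = sqrt (((h *\<^sub>R vec3 (iad a b) - h *\<^sub>R vec3 (iad a d)) \<bullet> n)^2 / (n \<bullet> n))"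
    by (simp add: real_sqrt_divide norm_eq_sqrt_inner)
  also have "\<dots> \<le> sqrt (2 - q)"
    using ineq Npos by (simp add: pos_divide_le_eq)
  finally have "setdist {h *\<^sub>R vec3 (iad a b) + t *\<^sub>R (\<alpha> *\<^sub>R vec3 (isb b a) + \<beta> *\<^sub>R vec3 (icr a b)) | t. True}
     {h *\<^sub>R vec3 (iad a d) + t *\<^sub>R (\<alpha> *\<^sub>R vec3 (isb d a) + \<beta> *\<^sub>R vec3 (icr a d)) | t. True} \<le> sqrt (2 - q)"
    using up by linarith
  then show ?thesis
    unfolding LA1_def LA2_def line_repr[OF A_U6(1) A_U6(2) A_U6(4) A_U6(5)] line_repr[OF A_U6(1) A_U6(3) A_U6(6) A_U6(7)]
      q_def a_def b_def d_def \<alpha>_def \<beta>_def h_def .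
qed

theorem theorem1:
  defines "\<delta>O \<equiv> arctan (root 4 3 / sqrt 2)"
  shows "\<delta>O \<in> {0..pi/2}
    \<and> (\<forall>\<delta>\<in>{0..pi/2}. min_line_dist \<delta> \<le> min_line_dist \<delta>O)
    \<and> (min_line_dist \<delta>O)\<^sup>2 =
        - (4 * (sin (2 * \<delta>O))\<^sup>2) / ((cos (2 * \<delta>O) - 3) * (cos (2 * \<delta>O) + 5))
    \<and> (min_line_dist \<delta>O)\<^sup>2 = 2 - sqrt 3
    \<and> 2 - sqrt 3 = (sqrt 3 - 1)\<^sup>2 / 2"
proof -
  note F = dO_facts
  define q where "q = sqrt 3"
  have q2: "q^2 = 3" and ql: "17320508 / 10^7 \<le> q" and qh: "q \<le> 17320509 / 10^7"
    using F(1,5,6) unfolding q_def by auto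
  have cO: "cos \<delta>O = q - 1" using F(3) unfolding \<delta>O_def q_def by simp
  define S where "S = (\<lambda>\<delta>. {setdist l1 l2 | l1 l2. l1 \<in> line_config \<delta> \<and> l2 \<in> line_config \<delta> \<and> l1 \<noteq> l2})"
  have mld: "min_line_dist \<delta> = Inf (S \<delta>)" for \<delta> unfolding min_line_dist_def S_def ..
  have inS: "setdist (LA1 \<delta>) (LA2 \<delta>) \<in> S \<delta>" for \<delta>
    unfolding S_def
    apply (rule CollectI)
    apply (rule exI[of _ "LA1 \<delta>"])
    apply (rule exI[of _ "LA2 \<delta>"])
    using LA_in LA_ne by simp
  have bdd: "bdd_below (S \<delta>)" for \<delta>
    unfolding S_def by (rule bdd_belowI[of _ 0]) auto
  have upper: "min_line_dist \<delta> \<le> sqrt (2 - q)" for \<delta>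
  proof -
    have "Inf (S \<delta>) \<le> setdist (LA1 \<delta>) (LA2 \<delta>)" by (rule cInf_lower[OF inS bdd])
    then show ?thesis unfolding mld q_def using pairA_upper[of \<delta>] by linarith
  qed
  have lowerO: "sqrt (2 - q) \<le> min_line_dist \<delta>O"
    unfolding mld
  proof (rule cInf_greatest)
    show "S \<delta>O \<noteq> {}" using inS by blast
    fix x assume "x \<in> S \<delta>O"
    then obtain l1 l2 where x: "x = setdist l1 l2" and l: "l1 \<in> line_config \<delta>O" "l2 \<in> line_config \<delta>O" "l1 \<noteq> l2"
      unfolding S_def by auto
    have "sqrt (2 - sqrt 3) \<le> setdist l1 l2"
      by (rule lower_cfg) (use l in \<open>simp_all add: \<delta>O_def\<close>)
    then show "sqrt (2 - q) \<le> x" unfolding q_def x .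
  qed
  have eqO: "min_line_dist \<delta>O = sqrt (2 - q)" using upper[of \<delta>O] lowerO by linarith
  have K0: "2 - q \<ge> 0" using qh by simp
  have sqO: "(min_line_dist \<delta>O)^2 = 2 - q" unfolding eqO using K0 by simp
  have qm1: "(q - 1)^2 = 4 - 2*q"
  proof -
    have "(q - 1)^2 = q^2 - 2*q + 1" by (simp add: power2_eq_square algebra_simps)
    then show ?thesis unfolding q2 by simp
  qed
  have c2: "cos (2 * \<delta>O) = 7 - 4*q"
    unfolding cos_double_cos cO qm1 by simp
  have s2: "(sin (2 * \<delta>O))^2 = 56*q - 96"
  proof -
    have "(sin (2 * \<delta>O))^2 = 1 - (7 - 4*q)^2" unfolding sin_squared_eq c2 ..
    also have "\<dots> = 1 - 49 + 56*q - 16*q^2" by (simp add: power2_eq_square algebra_simps)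
    also have "\<dots> = 56*q - 96" unfolding q2 by simp
    finally show ?thesis .
  qed
  have den: "(cos (2 * \<delta>O) - 3) * (cos (2 * \<delta>O) + 5) = 32 * (3 - 2*q)"
  proof -
    have "(cos (2 * \<delta>O) - 3) * (cos (2 * \<delta>O) + 5) = (4 - 4*q) * (12 - 4*q)" unfolding c2 by simp
    also have "\<dots> = 48 - 64*q + 16*q^2" by (simp add: power2_eq_square algebra_simps)
    also have "\<dots> = 32 * (3 - 2*q)" unfolding q2 by simp
    finally show ?thesis .
  qed
  have d0: "3 - 2*q < 0" using ql by simp
  have num: "(2 - q) * (32 * (3 - 2*q)) = - (4 * (56*q - 96))"
  proof -
    have "(2 - q) * (32 * (3 - 2*q)) = 192 - 224*q + 64*q^2" by (simp add: power2_eq_square algebra_simps)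
    then show ?thesis unfolding q2 by simp
  qed
  have dnz: "32 * (3 - 2*q) \<noteq> 0" using d0 by simp
  have formula: "- (4 * (sin (2 * \<delta>O))\<^sup>2) / ((cos (2 * \<delta>O) - 3) * (cos (2 * \<delta>O) + 5)) = 2 - q"
    unfolding s2 den num[symmetric] using dnz by simp
  have last: "2 - sqrt 3 = (sqrt 3 - 1)\<^sup>2 / 2"
    unfolding q_def[symmetric] qm1 by simp
  show ?thesis
  proof (intro conjI)
    show "\<delta>O \<in> {0..pi/2}" using F(11) unfolding \<delta>O_def .
    show "\<forall>\<delta>\<in>{0..pi/2}. min_line_dist \<delta> \<le> min_line_dist \<delta>O" using upper eqO by simp
    show "(min_line_dist \<delta>O)\<^sup>2 = - (4 * (sin (2 * \<delta>O))\<^sup>2) / ((cos (2 * \<delta>O) - 3) * (cos (2 * \<delta>O) + 5))"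
      using sqO formula by simp
    show "(min_line_dist \<delta>O)\<^sup>2 = 2 - sqrt 3" using sqO unfolding q_def .
    show "2 - sqrt 3 = (sqrt 3 - 1)\<^sup>2 / 2" by (rule last)
  qed
qed

end
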